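(* Let $(X,\mathcal A,\mathfrak m)$ be a probability space. Then $\|\cdot\|_{0^+}$ and $\|\cdot\|_{0^-}$ are hyperbolic norms on ${\sf L}(X)$, and $$\int fg\,d\mathfrak m\ge\|f\|_{0^+}\|g\|_{0^-}\qquad\forall f,g\in{\sf L}(X),$$ $$\|f\|_{0^\pm}=\inf\Big\{\int fg\,d\mathfrak m:\ g\in{\sf L}(X),\ \|g\|_{0^\mp}\ge1\Big\}\qquad\forall f\in{\sf L}(X),$$ $$\|f\|_{0^\pm}=\frac{1}{\|1/f\|_{0^\mp}}\qquad\forall f\in{\sf L}(X).$$
   Context: ${\sf L}(X)$ is the set of $\mathcal A$-measurable functions $X\to[0,+\infty]$ modulo $\mathfrak m$-a.e. equality, with pointwise sum and multiplication by nonnegative scalars (a prewedge). Conventions: $0\cdot(+\infty)=0$, $\log 0=-\infty$, $\log(+\infty)=+\infty$, $\exp(-\infty)=0$, $\exp(+\infty)=+\infty$, $1/0=+\infty$, $1/(+\infty)=0$. For measurable $\varphi:X\to[-\infty,+\infty]$, $\int\varphi\,d\mathfrak m$ is well defined when at most one of $\int\varphi^+d\mathfrak m$, $\int\varphi^-d\mathfrak m$ is $+\infty$; $\int_+\varphi\,d\mathfrak m$ equals $\int\varphi\,d\mathfrak m$ if well defined and $+\infty$ otherwise, $\int_-\varphi\,d\mathfrak m$ equals $\int\varphi\,d\mathfrak m$ if well defined and $-\infty$ otherwise. Define $\|f\|_{0^+}:=\exp(\int_+\log f\,d\mathfrak m)$ and $\|f\|_{0^-}:=\exp(\int_-\log f\,d\mathfrak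 m)$. A hyperbolic norm on a prewedge $W$ is a map ${\sf hn}:W\to[0,\infty]$ with ${\sf hn}(0)=0$ and ${\sf hn}(\lambda_1v_1+\lambda_2v_2)\ge\lambda_1{\sf hn}(v_1)+\lambda_2{\sf hn}(v_2)$ for all $\lambda_i\in[0,\infty)$. *)

theory Defs
  imports "HOL-Probability.Probability"
begin

definition elog :: "ennreal \<Rightarrow> ereal" where
  "elog t = (if t = 0 then -\<infinity> else if t = \<top> then \<infinity> else ereal (ln (enn2real t)))"

definition eexp :: "ereal \<Rightarrow> ennreal" where
  "eexp s = (case s of ereal r \<Rightarrow> ennreal (exp r) | PInfty \<Rightarrow> \<top> | MInfty \<Rightarrow> 0)"

definition int_pos :: "'a measure \<Rightarrow> ('a \<Rightarrow> ereal) \<Rightarrow> ennreal" where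
  "int_pos M \<phi> = (\<integral>\<^sup>+ x. e2ennreal (max 0 (\<phi> x)) \<partial>M)"

definition int_neg :: "'a measure \<Rightarrow> ('a \<Rightarrow> ereal) \<Rightarrow> ennreal" where
  "int_neg M \<phi> = (\<integral>\<^sup>+ x. e2ennreal (max 0 (- \<phi> x)) \<partial>M)"

definition int_upper :: "'a measure \<Rightarrow> ('a \<Rightarrow> ereal) \<Rightarrow> ereal" where
  "int_upper M \<phi> = (if int_pos M \<phi> = \<top> \<and> int_neg M \<phi> = \<top> then \<infinity>
                     else enn2ereal (int_pos M \<phi>) - enn2ereal (int_neg M \<phi>))"

definition int_lower :: "'a measure \<Rightarrow> ('a \<Rightarrow> ereal) \<Rightarrow> ereal" where
  "int_lower M \<phi> = (if int_pos M \<phi> = \<top> \<and> int_neg M \<phi> = \<top> then -\<infinity>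
                     else enn2ereal (int_pos M \<phi>) - enn2ereal (int_neg M \<phi>))"

definition norm_0p :: "'a measure \<Rightarrow> ('a \<Rightarrow> ennreal) \<Rightarrow> ennreal" where
  "norm_0p M f = eexp (int_upper M (\<lambda>x. elog (f x)))"

definition norm_0m :: "'a measure \<Rightarrow> ('a \<Rightarrow> ennreal) \<Rightarrow> ennreal" where
  "norm_0m M f = eexp (int_lower M (\<lambda>x. elog (f x)))"

(* hyperbolic norm on the prewedge L(X): elements of L(X) are represented by
   measurable functions X \<rightarrow> [0,+\<infinity>]; the map must respect a.e. equality
   (so that it is a map on the quotient), vanish at 0 and be superadditive
   w.r.t. nonnegative (finite) scalars. *)
definition hyperbolic_norm_L :: "'a measure \<Rightarrow> (('a \<Rightarrow> ennreal) \<Rightarrow> ennreal) \<Rightarrow> bool" where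
  "hyperbolic_norm_L M hn \<longleftrightarrow>
     (\<forall>f\<in>borel_measurable M. \<forall>g\<in>borel_measurable M.
        (AE x in M. f x = g x) \<longrightarrow> hn f = hn g) \<and>
     hn (\<lambda>x. 0) = 0 \<and>
     (\<forall>f\<in>borel_measurable M. \<forall>g\<in>borel_measurable M. \<forall>l1 l2 :: real.
        0 \<le> l1 \<longrightarrow> 0 \<le> l2 \<longrightarrow>
        hn (\<lambda>x. ennreal l1 * f x + ennreal l2 * g x) \<ge> ennreal l1 * hn f + ennreal l2 * hn g)"

end

theory Submission imports Defs begin


definition lpos :: "ennreal \<Rightarrow> ennreal" where "lpos t = e2ennreal (max 0 (elog t))"
definition lneg :: "ennreal \<Rightarrow> ennreal" where "lneg t = e2ennreal (max 0 (- elog t))"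

lemma lpos_0[simp]: "lpos 0 = 0" by (simp add: lpos_def elog_def e2ennreal_neg)
lemma lneg_0[simp]: "lneg 0 = top" by (simp add: lneg_def elog_def)
lemma lpos_top[simp]: "lpos top = top" by (simp add: lpos_def elog_def)
lemma lneg_top[simp]: "lneg top = 0" by (simp add: lneg_def elog_def e2ennreal_neg)
lemma lpos_real: "0 < r \<Longrightarrow> lpos (ennreal r) = ennreal (max 0 (ln r))"
  by (simp add: lpos_def elog_def max_def)
lemma lneg_real: "0 < r \<Longrightarrow> lneg (ennreal r) = ennreal (max 0 (- ln r))"
  by (simp add: lneg_def elog_def max_def)

lemma elog_measurable[measurable]: "elog \<in> borel_measurable borel"
  unfolding elog_def by measurable

lemma eexp_ereal[simp]: "eexp (ereal r) = ennreal (exp r)" by (simp add: eexp_def)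
lemma eexp_inf[simp]: "eexp \<infinity> = top" by (simp add: eexp_def)
lemma eexp_minf[simp]: "eexp (-\<infinity>) = 0" by (simp add: eexp_def)

lemma elog_inv: "elog (1 / t) = - elog t"
proof (cases t)
  case (real r)
  show ?thesis
  proof (cases "r = 0")
    case False
    with real have "1 / t = ennreal (1 / r)" using divide_ennreal[of 1 r] by simp
    with real False show ?thesis by (simp add: elog_def ln_div)
  qed (use real in \<open>simp add: elog_def\<close>)
qed (simp add: elog_def)

definition PP :: "'a measure \<Rightarrow> ('a \<Rightarrow> ennreal) \<Rightarrow> ennreal" where
  "PP M f = (\<integral>\<^sup>+ x. lpos (f x) \<partial>M)"
definition NN :: "'a measure \<Rightarrow> ('a \<Rightarrow> ennreal) \<Rightarrow> ennreal" where
  "NN M f = (\<integral>\<^sup>+ x. lneg (f x) \<partial>M)"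

lemma norm_0p_PN: "norm_0p M f = (if PP M f = top then top else if NN M f = top then 0
   else ennreal (exp (enn2real (PP M f) - enn2real (NN M f))))"
  unfolding norm_0p_def int_upper_def int_pos_def int_neg_def PP_def[symmetric, unfolded lpos_def]
    NN_def[symmetric, unfolded lneg_def]
  by (cases "PP M f"; cases "NN M f") (auto simp: ennreal_minus)

lemma norm_0m_PN: "norm_0m M f = (if NN M f = top then 0 else if PP M f = top then top
   else ennreal (exp (enn2real (PP M f) - enn2real (NN M f))))"
  unfolding norm_0m_def int_lower_def int_pos_def int_neg_def PP_def[symmetric, unfolded lpos_def]
    NN_def[symmetric, unfolded lneg_def]
  by (cases "PP M f"; cases "NN M f") (auto simp: ennreal_minus)

lemma lpos_inv: "lpos (1 / t) = lneg t" by (simp add: lpos_def lneg_def elog_inv)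
lemma lneg_inv: "lneg (1 / t) = lpos t" by (simp add: lpos_def lneg_def elog_inv)

lemma PP_inv: "PP M (\<lambda>x. 1 / f x) = NN M f" by (simp add: PP_def NN_def lpos_inv)
lemma NN_inv: "NN M (\<lambda>x. 1 / f x) = PP M f" by (simp add: PP_def NN_def lneg_inv)

lemma inv_exp_ennreal: "1 / ennreal (exp (a - b)) = ennreal (exp (b - a))"
  using divide_ennreal[of 1 "exp (a - b)"] by (simp add: exp_diff)

lemma recip_p: "norm_0p M f = 1 / norm_0m M (\<lambda>x. 1 / f x)"
  unfolding norm_0p_PN norm_0m_PN PP_inv NN_inv by (auto simp: inv_exp_ennreal ennreal_top_divide)

lemma recip_m: "norm_0m M f = 1 / norm_0p M (\<lambda>x. 1 / f x)"
  unfolding norm_0p_PN norm_0m_PN PP_inv NN_inv by (auto simp: inv_exp_ennreal ennreal_top_divide)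




lemma max0_id: "max 0 (a::real) - max 0 (-a) = a" by (simp add: max_def)

lemma pw_holder1: "lpos x \<le> x * y + lneg y"
proof (cases y)
  case (real s)
  show ?thesis
  proof (cases "s = 0")
    case True then show ?thesis using real by simp
  next
    case False
    hence s: "s > 0" using real by simp
    show ?thesis
    proof (cases x)
      case (real r)
      show ?thesis
      proof (cases "r = 0")
        case True then show ?thesis using real by simp
      next
        case False
        hence r: "r > 0" using real by simp
        have "ln (r * s) \<le> r * s - 1" using r s by (intro ln_le_minus_one) simp
        hence h: "ln r + ln s \<le> r * s - 1" using r s by (simp add: ln_mult)
        have "0 \<le> r * s" using r s by simp
        hence "max 0 (ln r) \<le> r * s + max 0 (- ln s)" using h by (simp add: max_def)
        hence "ennreal (max 0 (ln r)) \<le> ennreal (r * s + max 0 (- ln s))" by (rule ennreal_leI)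
        thus ?thesis unfolding \<open>x = ennreal r\<close> \<open>y = ennreal s\<close> lpos_real[OF r] lneg_real[OF s]
          using r s by (simp only: ennreal_mult[symmetric] ennreal_plus[symmetric] max.cobounded1 less_imp_le mult_nonneg_nonneg add_nonneg_nonneg)
      qed
    next
      case top then show ?thesis using s real by (simp add: ennreal_top_mult)
    qed
  qed
next
  case top
  then show ?thesis by (cases "x = 0") (auto simp: ennreal_mult_top)
qed

lemma pw_holder2:
  "lpos x + lpos y + ennreal (max 0 (1 - S)) \<le> lneg x + lneg y + x * y * ennreal (exp (- S)) + ennreal (max 0 (S - 1))"
proof (cases "x = 0 \<or> y = 0")
  case True then show ?thesis by auto
next
  case False
  hence x0: "x \<noteq> 0" and y0: "y \<noteq> 0" by auto
  show ?thesis
  proof (cases "x = top \<or> y = top")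
    case True
    then show ?thesis using x0 y0 by (auto simp: ennreal_mult_top ennreal_top_mult)
  next
    case False
    then obtain r s where r: "x = ennreal r" "r > 0" and s: "y = ennreal s" "s > 0" using x0 y0
      by (cases x; cases y) auto
    have "ln (r * s*exp (-S)) \<le> r * s*exp (-S) - 1" using r s by (intro ln_le_minus_one) simp
    hence "ln r + ln s - S \<le> r * s*exp (-S) - 1" using r s by (simp add: ln_mult)
    hence "max 0 (ln r) + max 0 (ln s) + max 0 (1 - S) \<le> max 0 (- ln r) + max 0 (- ln s) + r * s*exp (-S) + max 0 (S - 1)"
      unfolding max_def by (smt (verit))
    hence "ennreal (max 0 (ln r) + max 0 (ln s) + max 0 (1 - S)) \<le> ennreal (max 0 (- ln r) + max 0 (- ln s) + r * s*exp (-S) + max 0 (S - 1))"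
      by (rule ennreal_leI)
    moreover have "0 \<le> r * s * exp (-S)" using r s by simp
    ultimately show ?thesis unfolding r(1) s(1) lpos_real[OF r(2)] lneg_real[OF r(2)] lpos_real[OF s(2)] lneg_real[OF s(2)]
      using r s by (simp only: ennreal_mult[symmetric] ennreal_plus[symmetric] max.cobounded1 less_imp_le mult_nonneg_nonneg add_nonneg_nonneg exp_ge_zero)
  qed
qed

lemma pw_div_id:
  assumes c: "0 < c"
  shows "lpos (ennreal c / t) + lpos t + ennreal (max 0 (- ln c)) = lneg (ennreal c / t) + lneg t + ennreal (max 0 (ln c))"
proof (cases t)
  case (real r)
  show ?thesis
  proof (cases "r = 0")
    case True then show ?thesis using real c by simp
  next
    case False
    hence r: "r > 0" using real by simp
    have d: "ennreal c / ennreal r = ennreal (c / r)" using real r c divide_ennreal[of c r] by simp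
    have "max 0 (ln (c/r)) + max 0 (ln r) + max 0 (- ln c) = max 0 (- ln (c/r)) + max 0 (- ln r) + max 0 (ln c)"
      using r c using ln_div[of c r] unfolding max_def by (smt (verit))
    moreover have "c / r > 0" using r c by simp
    ultimately show ?thesis unfolding real d lpos_real[OF r] lneg_real[OF r] lpos_real[OF \<open>c / r > 0\<close>] lneg_real[OF \<open>c / r > 0\<close>]
      by (simp only: ennreal_plus[symmetric] max.cobounded1 add_nonneg_nonneg)
  qed
next
  case top then show ?thesis by simp
qed

lemma pw_div_neg:
  assumes c: "0 < c"
  shows "lneg (ennreal c / t) \<le> lpos t + ennreal (max 0 (- ln c))"
proof (cases t)
  case (real r)
  show ?thesis
  proof (cases "r = 0")
    case True then show ?thesis using real c by (simp add: ennreal_top_divide)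
  next
    case False
    hence r: "r > 0" using real by simp
    have d: "ennreal c / ennreal r = ennreal (c / r)" using real r c divide_ennreal[of c r] by simp
    have "max 0 (- ln (c/r)) \<le> max 0 (ln r) + max 0 (- ln c)"
      using r c using ln_div[of c r] unfolding max_def by (smt (verit))
    hence "ennreal (max 0 (- ln (c/r))) \<le> ennreal (max 0 (ln r) + max 0 (- ln c))" by (rule ennreal_leI)
    moreover have "c / r > 0" using r c by simp
    ultimately show ?thesis unfolding real d lpos_real[OF r] lneg_real[OF r] lpos_real[OF \<open>c / r > 0\<close>] lneg_real[OF \<open>c / r > 0\<close>]
      by (simp only: ennreal_plus[symmetric] max.cobounded1 add_nonneg_nonneg)
  qed
next
  case top then show ?thesis by simp
qed

lemma pw_cut:
  assumes c: "0 < c"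
  shows "lneg t \<le> lpos (if t \<le> 1 then ennreal c / t else 0) + ennreal (max 0 (- ln c))"
proof (cases "t \<le> 1")
  case False
  have "lneg t = 0"
  proof (cases "t = top")
    case False
    then obtain r where r: "t = ennreal r" "r \<ge> 0" by (cases t) auto
    with \<open>\<not> t \<le> 1\<close> have "r > 1" by (auto simp: ennreal_le_1 not_le)
    then show ?thesis using r by (simp add: lneg_real)
  qed simp
  then show ?thesis by simp
next
  case True
  show ?thesis
  proof (cases "t = 0")
    case True then show ?thesis using c by simp
  next
    case False
    then obtain r where r: "t = ennreal r" "r > 0" "r \<le> 1" using \<open>t \<le> 1\<close>
      by (cases t) (auto simp: ennreal_le_1 top_unique)
    have d: "ennreal c / ennreal r = ennreal (c / r)" using r c divide_ennreal[of c r] by simp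
    have "max 0 (- ln r) \<le> max 0 (ln (c/r)) + max 0 (- ln c)"
      using r c using ln_div[of c r] unfolding max_def by (smt (verit))
    hence "ennreal (max 0 (- ln r)) \<le> ennreal (max 0 (ln (c/r)) + max 0 (- ln c))" by (rule ennreal_leI)
    moreover have "c / r > 0" using r c by simp
    moreover have e: "(if t \<le> 1 then ennreal c / t else 0) = ennreal (c / r)" using \<open>t \<le> 1\<close> r(1) d by simp
    ultimately show ?thesis unfolding e unfolding r(1) lneg_real[OF r(2)] lpos_real[OF \<open>c / r > 0\<close>]
      by (simp only: ennreal_plus[symmetric] max.cobounded1 add_nonneg_nonneg)
  qed
qed

lemma pw_mul_div: "t * (c / t) \<le> (c::ennreal)"
proof (cases "t = 0 \<or> t = top")
  case True then show ?thesis by auto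
next
  case False
  hence "t * (c / t) = c" by (simp add: ennreal_times_divide mult.commute[of t] mult_divide_eq_ennreal)
  then show ?thesis by simp
qed

lemma pw_mul_cut: "t * (if t \<le> 1 then c / t else 0) \<le> (c::ennreal)"
  using pw_mul_div[of t c] by auto




lemma lpos_measurable[measurable]: "lpos \<in> borel_measurable borel"
  unfolding lpos_def by measurable
lemma lneg_measurable[measurable]: "lneg \<in> borel_measurable borel"
  unfolding lneg_def by measurable

context prob_space begin

lemma int_add_const:
  assumes "u \<in> borel_measurable M"
  shows "(\<integral>\<^sup>+ x. u x + ennreal k \<partial>M) = (\<integral>\<^sup>+ x. u x \<partial>M) + ennreal k"
  using assms by (simp add: nn_integral_add emeasure_space_1)

lemma holder:
  assumes f: "f \<in> borel_measurable M" and g: "g \<in> borel_measurable M"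
  shows "norm_0p M f * norm_0m M g \<le> (\<integral>\<^sup>+ x. f x * g x \<partial>M)"
proof -
  define I where "I = (\<integral>\<^sup>+ x. f x * g x \<partial>M)"
  show ?thesis
  proof (cases "norm_0p M f = 0 \<or> norm_0m M g = 0 \<or> I = top")
    case True then show ?thesis unfolding I_def[symmetric] by auto
  next
    case False
    hence a0: "norm_0p M f \<noteq> 0" and b0: "norm_0m M g \<noteq> 0" and It: "I \<noteq> top" by auto
    have Ng: "NN M g \<noteq> top" using b0 by (auto simp: norm_0m_PN)
    have PfNf: "PP M f = top \<or> NN M f \<noteq> top" using a0 by (auto simp: norm_0p_PN split: if_splits)
    have "PP M f \<le> (\<integral>\<^sup>+ x. f x * g x + lneg (g x) \<partial>M)"
      unfolding PP_def by (rule nn_integral_mono) (rule pw_holder1)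
    also have "\<dots> = I + NN M g" unfolding I_def NN_def using f g by (simp add: nn_integral_add)
    finally have "PP M f \<noteq> top" using It Ng by (auto simp: top_unique)
    hence Pf: "PP M f \<noteq> top" and Nf: "NN M f \<noteq> top" using PfNf by auto
    have "PP M g \<le> (\<integral>\<^sup>+ x. f x * g x + lneg (f x) \<partial>M)"
      unfolding PP_def by (rule nn_integral_mono) (subst mult.commute, rule pw_holder1)
    also have "\<dots> = I + NN M f" unfolding I_def NN_def using f g by (simp add: nn_integral_add)
    finally have Pg: "PP M g \<noteq> top" using It Nf by (auto simp: top_unique)
    obtain pf where pf: "PP M f = ennreal pf" "0 \<le> pf" using Pf by (cases "PP M f") auto
    obtain nf where nf: "NN M f = ennreal nf" "0 \<le> nf" using Nf by (cases "NN M f") auto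
    obtain pg where pg: "PP M g = ennreal pg" "0 \<le> pg" using Pg by (cases "PP M g") auto
    obtain ng where ng: "NN M g = ennreal ng" "0 \<le> ng" using Ng by (cases "NN M g") auto
    obtain i where i: "I = ennreal i" "0 \<le> i" using It by (cases I) auto
    define S where "S = pf - nf + (pg - ng)"
    have "(\<integral>\<^sup>+ x. lpos (f x) + lpos (g x) + ennreal (max 0 (1 - S)) \<partial>M) \<le>
          (\<integral>\<^sup>+ x. lneg (f x) + lneg (g x) + f x * g x * ennreal (exp (- S)) + ennreal (max 0 (S - 1)) \<partial>M)"
      by (rule nn_integral_mono) (rule pw_holder2)
    also have "(\<integral>\<^sup>+ x. lneg (f x) + lneg (g x) + f x * g x * ennreal (exp (- S)) + ennreal (max 0 (S - 1)) \<partial>M)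
       = NN M f + NN M g + I * ennreal (exp (- S)) + ennreal (max 0 (S - 1))"
      using f g unfolding NN_def I_def
      by (simp add: nn_integral_add emeasure_space_1 nn_integral_multc)
    also have "(\<integral>\<^sup>+ x. lpos (f x) + lpos (g x) + ennreal (max 0 (1 - S)) \<partial>M)
       = PP M f + PP M g + ennreal (max 0 (1 - S))"
      using f g unfolding PP_def
      by (simp add: nn_integral_add emeasure_space_1)
    finally have "ennreal (pf + pg + max 0 (1 - S)) \<le> ennreal (nf + ng + i * exp (- S) + max 0 (S - 1))"
      using pf nf pg ng i by (simp add: ennreal_plus ennreal_mult)
    hence "pf + pg + max 0 (1 - S) \<le> nf + ng + i * exp (- S) + max 0 (S - 1)"
      by (subst (asm) ennreal_le_iff) (auto intro!: add_nonneg_nonneg simp: ng nf i)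
    hence "1 \<le> i * exp (- S)" unfolding S_def max_def by (smt (verit))
    hence "exp S \<le> i" by (simp add: exp_minus field_simps)
    moreover have "norm_0p M f * norm_0m M g = ennreal (exp S)"
      using pf nf pg ng by (simp add: norm_0p_PN norm_0m_PN ennreal_mult[symmetric] S_def exp_add[symmetric])
    ultimately show ?thesis unfolding I_def[symmetric] i by (simp add: ennreal_leI)
  qed
qed

end



context prob_space begin

lemma div_facts:
  assumes f: "f \<in> borel_measurable M" and c: "0 < c"
  shows "PP M (\<lambda>x. ennreal c / f x) + PP M f + ennreal (max 0 (- ln c)) =
         NN M (\<lambda>x. ennreal c / f x) + NN M f + ennreal (max 0 (ln c))"
    and "NN M (\<lambda>x. ennreal c / f x) \<le> PP M f + ennreal (max 0 (- ln c))"
proof -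
  have "(\<integral>\<^sup>+ x. lpos (ennreal c / f x) + lpos (f x) + ennreal (max 0 (- ln c)) \<partial>M) =
        (\<integral>\<^sup>+ x. lneg (ennreal c / f x) + lneg (f x) + ennreal (max 0 (ln c)) \<partial>M)"
    using pw_div_id[OF c] by simp
  thus "PP M (\<lambda>x. ennreal c / f x) + PP M f + ennreal (max 0 (- ln c)) =
         NN M (\<lambda>x. ennreal c / f x) + NN M f + ennreal (max 0 (ln c))"
    using f unfolding PP_def NN_def by (simp add: nn_integral_add emeasure_space_1)
  have "NN M (\<lambda>x. ennreal c / f x) \<le> (\<integral>\<^sup>+ x. lpos (f x) + ennreal (max 0 (- ln c)) \<partial>M)"
    unfolding NN_def by (rule nn_integral_mono) (rule pw_div_neg[OF c])
  thus "NN M (\<lambda>x. ennreal c / f x) \<le> PP M f + ennreal (max 0 (- ln c))"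
    using f unfolding PP_def by (simp add: nn_integral_add emeasure_space_1)
qed

lemma div_int:
  "(\<integral>\<^sup>+ x. f x * (ennreal c / f x) \<partial>M) \<le> ennreal c"
proof -
  have "(\<integral>\<^sup>+ x. f x * (ennreal c / f x) \<partial>M) \<le> (\<integral>\<^sup>+ x. ennreal c \<partial>M)"
    by (rule nn_integral_mono) (rule pw_mul_div)
  thus ?thesis by (simp add: emeasure_space_1)
qed

lemma div_finite:
  assumes f: "f \<in> borel_measurable M" and c: "0 < c"
    and Pf: "PP M f \<noteq> top" and Nf: "NN M f \<noteq> top"
    and le: "ennreal (exp (enn2real (PP M f) - enn2real (NN M f))) \<le> ennreal c"
  shows "PP M (\<lambda>x. ennreal c / f x) \<noteq> top" "NN M (\<lambda>x. ennreal c / f x) \<noteq> top"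
    "1 \<le> ennreal (exp (enn2real (PP M (\<lambda>x. ennreal c / f x)) - enn2real (NN M (\<lambda>x. ennreal c / f x))))"
proof -
  note id = div_facts(1)[OF f c] and neg = div_facts(2)[OF f c]
  obtain pf where pf: "PP M f = ennreal pf" "0 \<le> pf" using Pf by (cases "PP M f") auto
  obtain nf where nf: "NN M f = ennreal nf" "0 \<le> nf" using Nf by (cases "NN M f") auto
  show Ng: "NN M (\<lambda>x. ennreal c / f x) \<noteq> top" using neg pf by (auto simp: top_unique)
  have "PP M (\<lambda>x. ennreal c / f x) + PP M f + ennreal (max 0 (- ln c)) \<noteq> top" using id Ng nf by simp
  thus Pg: "PP M (\<lambda>x. ennreal c / f x) \<noteq> top" by (simp add: ennreal_add_eq_top)
  obtain pg where pg: "PP M (\<lambda>x. ennreal c / f x) = ennreal pg" "0 \<le> pg" using Pg by (cases "PP M (\<lambda>x. ennreal c / f x)") auto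
  obtain ng where ng: "NN M (\<lambda>x. ennreal c / f x) = ennreal ng" "0 \<le> ng" using Ng by (cases "NN M (\<lambda>x. ennreal c / f x)") auto
  have "ennreal (pg + pf + max 0 (- ln c)) = ennreal (ng + nf + max 0 (ln c))"
    using id pf nf pg ng by (simp add: ennreal_plus)
  hence e: "pg + pf + max 0 (- ln c) = ng + nf + max 0 (ln c)"
    by (subst (asm) ennreal_inj) (auto intro!: add_nonneg_nonneg simp: pf nf pg ng)
  have "exp (pf - nf) \<le> c" using le pf nf by (simp add: ennreal_le_iff2 ennreal_le_iff)
  hence "pf - nf \<le> ln c" using c by (metis exp_gt_zero ln_exp ln_le_cancel_iff)
  hence "0 \<le> pg - ng" using e unfolding max_def by (smt (verit))
  thus "1 \<le> ennreal (exp (enn2real (PP M (\<lambda>x. ennreal c / f x)) - enn2real (NN M (\<lambda>x. ennreal c / f x))))"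
    using pg ng by simp
qed

lemma attain_p:
  assumes f: "f \<in> borel_measurable M" and c: "0 < c"
    and le: "norm_0p M f \<le> ennreal c" and lt: "norm_0p M f \<noteq> top"
  shows "\<exists>g\<in>borel_measurable M. 1 \<le> norm_0m M g \<and> (\<integral>\<^sup>+ x. f x * g x \<partial>M) \<le> ennreal c"
proof (intro bexI conjI)
  let ?g = "\<lambda>x. ennreal c / f x"
  show "?g \<in> borel_measurable M" using f by measurable
  show "(\<integral>\<^sup>+ x. f x * ?g x \<partial>M) \<le> ennreal c" by (rule div_int)
  have Pf: "PP M f \<noteq> top" using lt by (auto simp: norm_0p_PN)
  show "1 \<le> norm_0m M ?g"
  proof (cases "NN M f = top")
    case True
    have "PP M ?g + PP M f + ennreal (max 0 (- ln c)) = top" using div_facts(1)[OF f c] True by simp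
    hence "PP M ?g = top" using Pf by (simp add: ennreal_add_eq_top)
    moreover have "NN M ?g \<noteq> top" using div_facts(2)[OF f c] Pf by (auto simp: top_unique)
    ultimately show ?thesis by (simp add: norm_0m_PN)
  next
    case False
    have "ennreal (exp (enn2real (PP M f) - enn2real (NN M f))) \<le> ennreal c"
      using le Pf False by (simp add: norm_0p_PN)
    from div_finite[OF f c Pf False this] show ?thesis by (simp add: norm_0m_PN)
  qed
qed

lemma attain_m:
  assumes f: "f \<in> borel_measurable M" and c: "0 < c"
    and le: "norm_0m M f \<le> ennreal c" and lt: "norm_0m M f \<noteq> top"
  shows "\<exists>g\<in>borel_measurable M. 1 \<le> norm_0p M g \<and> (\<integral>\<^sup>+ x. f x * g x \<partial>M) \<le> ennreal c"
proof (cases "NN M f = top")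
  case True
  let ?g = "\<lambda>x. if f x \<le> 1 then ennreal c / f x else 0"
  show ?thesis
  proof (intro bexI conjI)
    show "?g \<in> borel_measurable M" using f by measurable
    have "(\<integral>\<^sup>+ x. f x * ?g x \<partial>M) \<le> (\<integral>\<^sup>+ x. ennreal c \<partial>M)"
      by (rule nn_integral_mono) (rule pw_mul_cut)
    thus "(\<integral>\<^sup>+ x. f x * ?g x \<partial>M) \<le> ennreal c" by (simp add: emeasure_space_1)
    have "NN M f \<le> (\<integral>\<^sup>+ x. lpos (?g x) + ennreal (max 0 (- ln c)) \<partial>M)"
      unfolding NN_def by (rule nn_integral_mono) (rule pw_cut[OF c])
    also have "\<dots> = PP M ?g + ennreal (max 0 (- ln c))"
      using f unfolding PP_def by (simp add: nn_integral_add emeasure_space_1)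
    finally have "PP M ?g = top" using True by (simp add: top_unique ennreal_add_eq_top)
    thus "1 \<le> norm_0p M ?g" by (simp add: norm_0p_PN)
  qed
next
  case False
  let ?g = "\<lambda>x. ennreal c / f x"
  have Pf: "PP M f \<noteq> top" using lt False by (auto simp: norm_0m_PN)
  show ?thesis
  proof (intro bexI conjI)
    show "?g \<in> borel_measurable M" using f by measurable
    show "(\<integral>\<^sup>+ x. f x * ?g x \<partial>M) \<le> ennreal c" by (rule div_int)
    have "ennreal (exp (enn2real (PP M f) - enn2real (NN M f))) \<le> ennreal c"
      using le Pf False by (simp add: norm_0m_PN)
    from div_finite[OF f c Pf False this] show "1 \<le> norm_0p M ?g" by (simp add: norm_0p_PN)
  qed
qed

end



lemma le_from_eps:
  fixes a X :: ennreal
  assumes h: "\<And>c. 0 < c \<Longrightarrow> a \<le> ennreal c \<Longrightarrow> X \<le> ennreal c" and a: "a \<noteq> top"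
  shows "X \<le> a"
proof -
  obtain r where r: "a = ennreal r" "0 \<le> r" using a by (cases a) auto
  show ?thesis
  proof (cases "r = 0")
    case False
    then show ?thesis using h[of r] r by simp
  next
    case True
    show ?thesis
    proof (rule ennreal_le_epsilon)
      fix e :: real assume "0 < e"
      then show "X \<le> a + ennreal e" using h[of e] r True by simp
    qed
  qed
qed

context prob_space begin

lemma INF_p:
  assumes f: "f \<in> borel_measurable M"
  shows "norm_0p M f = (INF g\<in>{g\<in>borel_measurable M. norm_0m M g \<ge> 1}. \<integral>\<^sup>+ x. f x * g x \<partial>M)"
proof (rule antisym)
  show "norm_0p M f \<le> (INF g\<in>{g\<in>borel_measurable M. norm_0m M g \<ge> 1}. \<integral>\<^sup>+ x. f x * g x \<partial>M)"
  proof (rule INF_greatest)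
    fix g assume g: "g \<in> {g\<in>borel_measurable M. norm_0m M g \<ge> 1}"
    have "norm_0p M f = norm_0p M f * 1" by simp
    also have "\<dots> \<le> norm_0p M f * norm_0m M g" using g by (intro mult_left_mono) auto
    also have "\<dots> \<le> (\<integral>\<^sup>+ x. f x * g x \<partial>M)" using g f by (intro holder) auto
    finally show "norm_0p M f \<le> (\<integral>\<^sup>+ x. f x * g x \<partial>M)" .
  qed
  show "(INF g\<in>{g\<in>borel_measurable M. norm_0m M g \<ge> 1}. \<integral>\<^sup>+ x. f x * g x \<partial>M) \<le> norm_0p M f"
  proof (cases "norm_0p M f = top")
    case False
    show ?thesis
    proof (rule le_from_eps[OF _ False])
      fix c :: real assume "0 < c" "norm_0p M f \<le> ennreal c"
      from attain_p[OF f this False] obtain g where "g \<in> borel_measurable M" "1 \<le> norm_0m M g"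
        "(\<integral>\<^sup>+ x. f x * g x \<partial>M) \<le> ennreal c" by blast
      then show "(INF g\<in>{g\<in>borel_measurable M. norm_0m M g \<ge> 1}. \<integral>\<^sup>+ x. f x * g x \<partial>M) \<le> ennreal c"
        by (intro INF_lower2[of g]) auto
    qed
  qed simp
qed

lemma INF_m:
  assumes f: "f \<in> borel_measurable M"
  shows "norm_0m M f = (INF g\<in>{g\<in>borel_measurable M. norm_0p M g \<ge> 1}. \<integral>\<^sup>+ x. f x * g x \<partial>M)"
proof (rule antisym)
  show "norm_0m M f \<le> (INF g\<in>{g\<in>borel_measurable M. norm_0p M g \<ge> 1}. \<integral>\<^sup>+ x. f x * g x \<partial>M)"
  proof (rule INF_greatest)
    fix g assume g: "g \<in> {g\<in>borel_measurable M. norm_0p M g \<ge> 1}"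
    have "norm_0m M f = 1 * norm_0m M f" by simp
    also have "\<dots> \<le> norm_0p M g * norm_0m M f" using g by (intro mult_right_mono) auto
    also have "\<dots> \<le> (\<integral>\<^sup>+ x. g x * f x \<partial>M)" using g f by (intro holder) auto
    finally show "norm_0m M f \<le> (\<integral>\<^sup>+ x. f x * g x \<partial>M)" by (simp add: mult.commute)
  qed
  show "(INF g\<in>{g\<in>borel_measurable M. norm_0p M g \<ge> 1}. \<integral>\<^sup>+ x. f x * g x \<partial>M) \<le> norm_0m M f"
  proof (cases "norm_0m M f = top")
    case False
    show ?thesis
    proof (rule le_from_eps[OF _ False])
      fix c :: real assume "0 < c" "norm_0m M f \<le> ennreal c"
      from attain_m[OF f this False] obtain g where "g \<in> borel_measurable M" "1 \<le> norm_0p M g"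
        "(\<integral>\<^sup>+ x. f x * g x \<partial>M) \<le> ennreal c" by blast
      then show "(INF g\<in>{g\<in>borel_measurable M. norm_0p M g \<ge> 1}. \<integral>\<^sup>+ x. f x * g x \<partial>M) \<le> ennreal c"
        by (intro INF_lower2[of g]) auto
    qed
  qed simp
qed

lemma superadd:
  assumes INF: "\<And>f. f \<in> borel_measurable M \<Longrightarrow> hn f = (INF h\<in>S. \<integral>\<^sup>+ x. f x * h x \<partial>M)"
    and S: "S \<subseteq> borel_measurable M"
    and f: "f \<in> borel_measurable M" and g: "g \<in> borel_measurable M"
  shows "hn (\<lambda>x. ennreal l1 * f x + ennreal l2 * g x) \<ge> ennreal l1 * hn f + ennreal l2 * hn g"
proof -
  have m: "(\<lambda>x. ennreal l1 * f x + ennreal l2 * g x) \<in> borel_measurable M" using f g by measurable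
  show ?thesis unfolding INF[OF m] INF[OF f] INF[OF g]
  proof (rule INF_greatest)
    fix h assume h: "h \<in> S"
    hence hm: "h \<in> borel_measurable M" using S by auto
    have "ennreal l1 * (INF h\<in>S. \<integral>\<^sup>+ x. f x * h x \<partial>M) + ennreal l2 * (INF h\<in>S. \<integral>\<^sup>+ x. g x * h x \<partial>M)
        \<le> ennreal l1 * (\<integral>\<^sup>+ x. f x * h x \<partial>M) + ennreal l2 * (\<integral>\<^sup>+ x. g x * h x \<partial>M)"
      using h by (intro add_mono mult_left_mono INF_lower) auto
    also have "\<dots> = (\<integral>\<^sup>+ x. ennreal l1 * (f x * h x) + ennreal l2 * (g x * h x) \<partial>M)"
      using f g hm by (simp add: nn_integral_add nn_integral_cmult)
    also have "\<dots> = (\<integral>\<^sup>+ x. (ennreal l1 * f x + ennreal l2 * g x) * h x \<partial>M)"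
      by (simp add: distrib_right mult.assoc)
    finally show "ennreal l1 * (INF h\<in>S. \<integral>\<^sup>+ x. f x * h x \<partial>M) + ennreal l2 * (INF h\<in>S. \<integral>\<^sup>+ x. g x * h x \<partial>M)
        \<le> (\<integral>\<^sup>+ x. (ennreal l1 * f x + ennreal l2 * g x) * h x \<partial>M)" .
  qed
qed

lemma PN_AE:
  assumes "AE x in M. f x = g x"
  shows "PP M f = PP M g" "NN M f = NN M g"
  using assms unfolding PP_def NN_def by (auto intro!: nn_integral_cong_AE)

lemma hyp_p: "hyperbolic_norm_L M (norm_0p M)"
  unfolding hyperbolic_norm_L_def
proof (intro conjI ballI allI impI)
  fix f g :: "'a \<Rightarrow> ennreal" assume "AE x in M. f x = g x"
  then show "norm_0p M f = norm_0p M g" unfolding norm_0p_PN using PN_AE by simp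
next
  show "norm_0p M (\<lambda>x. 0) = 0" by (simp add: norm_0p_PN PP_def NN_def emeasure_space_1)
next
  fix f g :: "'a \<Rightarrow> ennreal" and l1 l2 :: real
  assume "f \<in> borel_measurable M" "g \<in> borel_measurable M"
  then show "norm_0p M (\<lambda>x. ennreal l1 * f x + ennreal l2 * g x) \<ge> ennreal l1 * norm_0p M f + ennreal l2 * norm_0p M g"
    by (intro superadd[where S="{g\<in>borel_measurable M. norm_0m M g \<ge> 1}"] INF_p) auto
qed

lemma hyp_m: "hyperbolic_norm_L M (norm_0m M)"
  unfolding hyperbolic_norm_L_def
proof (intro conjI ballI allI impI)
  fix f g :: "'a \<Rightarrow> ennreal" assume "AE x in M. f x = g x"
  then show "norm_0m M f = norm_0m M g" unfolding norm_0m_PN using PN_AE by simp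
next
  show "norm_0m M (\<lambda>x. 0) = 0" by (simp add: norm_0m_PN PP_def NN_def emeasure_space_1)
next
  fix f g :: "'a \<Rightarrow> ennreal" and l1 l2 :: real
  assume "f \<in> borel_measurable M" "g \<in> borel_measurable M"
  then show "norm_0m M (\<lambda>x. ennreal l1 * f x + ennreal l2 * g x) \<ge> ennreal l1 * norm_0m M f + ennreal l2 * norm_0m M g"
    by (intro superadd[where S="{g\<in>borel_measurable M. norm_0p M g \<ge> 1}"] INF_m) auto
qed

end

theorem mainTheorem19:
  fixes M :: "'a measure"
  assumes "prob_space M"
  shows "hyperbolic_norm_L M (norm_0p M) \<and> hyperbolic_norm_L M (norm_0m M)
    \<and> (\<forall>f\<in>borel_measurable M. \<forall>g\<in>borel_measurable M.
          (\<integral>\<^sup>+ x. f x * g x \<partial>M) \<ge> norm_0p M f * norm_0m M g)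
    \<and> (\<forall>f\<in>borel_measurable M.
          norm_0p M f = (INF g\<in>{g\<in>borel_measurable M. norm_0m M g \<ge> 1}. \<integral>\<^sup>+ x. f x * g x \<partial>M))
    \<and> (\<forall>f\<in>borel_measurable M.
          norm_0m M f = (INF g\<in>{g\<in>borel_measurable M. norm_0p M g \<ge> 1}. \<integral>\<^sup>+ x. f x * g x \<partial>M))
    \<and> (\<forall>f\<in>borel_measurable M. norm_0p M f = 1 / norm_0m M (\<lambda>x. 1 / f x))
    \<and> (\<forall>f\<in>borel_measurable M. norm_0m M f = 1 / norm_0p M (\<lambda>x. 1 / f x))"
  using prob_space.hyp_p[OF assms] prob_space.hyp_m[OF assms] prob_space.holder[OF assms]
    prob_space.INF_p[OF assms] prob_space.INF_m[OF assms] recip_p recip_m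
  by blast


end
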